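(* Let $\mu\in\mathbb{R}$ and let $\mathbf{A}\in\mathbb{R}^{m\times n}$ be a random matrix with independent rows. Suppose that for each $1\leq i\leq n$ the $i$-th column of $\mathbf{A}$ can be written as $\mathbf{a}^{col}_i=\mathbf{a}^{col}_{0,i}+\mu\mathbf{1}$, where $\mathbf{1}\in\mathbb{R}^m$ is the all-ones vector and $\mathbf{a}^{col}_{0,i}$ is a zero-mean random vector with independent components which is $1$-subgaussian, i.e. $\mathbb{E}[\exp(t\langle\mathbf{a}^{col}_{0,i},\mathbf{v}\rangle)]\leq\exp(t^2)$ for all $\mathbf{v}\in\mathbb{R}^m$ with $\|\mathbf{v}\|_2\leq 1$ and all $t\in\mathbb{R}$. Then $\mathbf{A}\in\mathcal{M}^+$ with probability at least $1-2n\exp\left(-\frac{\mu^2 m}{16}\right)$.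
   Context: $\mathcal{M}^+$ denotes the set of matrices $\mathbf{M}\in\mathbb{R}^{m\times n}$ for which there exists $\mathbf{t}\in\mathbb{R}^m$ with $\mathbf{M}^T\mathbf{t}>\mathbf{0}$ entrywise (i.e. the row span of $\mathbf{M}$ intersects the open positive orthant). *)

theory Defs
  imports "HOL-Probability.Probability"
begin

definition M_plus :: "real^'n^'m \<Rightarrow> bool" where
  "M_plus M \<longleftrightarrow> (\<exists>t :: real^'m. \<forall>i. (transpose M *v t) $ i > 0)"

end

theory Submission
  imports Defs
begin

lemma M_plus_open: "open {X :: real^'n^'m. M_plus X}"
proof -
  have "{X :: real^'n^'m. M_plus X} = (\<Union>t. \<Inter>i. {X. (transpose X *v t) $ i > 0})"
    unfolding M_plus_def by auto
  moreover have "open {X :: real^'n^'m. (transpose X *v t) $ i > 0}" for t i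
  proof -
    have eq: "(transpose X *v t) $ i = (\<Sum>j\<in>UNIV. X $ j $ i * t $ j)" for X :: "real^'n^'m"
      by (simp add: matrix_vector_mult_def transpose_def)
    have "continuous_on UNIV (\<lambda>X :: real^'n^'m. \<Sum>j\<in>UNIV. X $ j $ i * t $ j)"
      by (intro continuous_intros)
    then show ?thesis unfolding eq
      by (intro open_Collect_less) (auto intro: continuous_intros)
  qed
  ultimately show ?thesis by (auto intro!: open_INT open_UN)
qed

theorem theorem5:
  fixes M :: "'w measure"
    and A :: "'w \<Rightarrow> real^'n^'m"
    and a0 :: "'n \<Rightarrow> 'w \<Rightarrow> real^'m"
    and \<mu> :: real
  assumes "prob_space M"
    and A_rv: "A \<in> borel_measurable M"
    and rows_indep: "prob_space.indep_vars M (\<lambda>_. borel) (\<lambda>j \<omega>. A \<omega> $ j) UNIV"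
    and a0_rv: "\<And>i. a0 i \<in> borel_measurable M"
    and col_decomp: "\<And>i \<omega>. \<omega> \<in> space M \<Longrightarrow> column i (A \<omega>) = a0 i \<omega> + \<mu> *\<^sub>R (1 :: real^'m)"
    and comp_indep: "\<And>i. prob_space.indep_vars M (\<lambda>_. borel) (\<lambda>j \<omega>. a0 i \<omega> $ j) UNIV"
    and zero_mean: "\<And>i j. integrable M (\<lambda>\<omega>. a0 i \<omega> $ j) \<and> prob_space.expectation M (\<lambda>\<omega>. a0 i \<omega> $ j) = 0"
    and subgauss: "\<And>i (v :: real^'m) (t :: real). norm v \<le> 1 \<Longrightarrow>
        (\<integral>\<^sup>+ \<omega>. ennreal (exp (t * (a0 i \<omega> \<bullet> v))) \<partial>M) \<le> ennreal (exp (t\<^sup>2))"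
  shows "measure M {\<omega> \<in> space M. M_plus (A \<omega>)}
           \<ge> 1 - 2 * real CARD('n) * exp (- (\<mu>\<^sup>2 * real CARD('m) / 16))"
proof -
  interpret prob_space M by fact
  define m where "m = real CARD('m)"
  define n where "n = real CARD('n)"
  have m_pos: "m > 0" and n_pos: "n > 0" by (auto simp: m_def n_def)
  define S where "S = {\<omega> \<in> space M. M_plus (A \<omega>)}"
  have S_meas: "S \<in> sets M"
  proof -
    have "S = A -` {X. M_plus X} \<inter> space M" unfolding S_def by auto
    thus ?thesis using measurable_sets[OF A_rv borel_open[OF M_plus_open]] by simp
  qed
  show ?thesis
  proof (cases "\<mu> = 0")
    case True
    have "1 - 2 * n * exp (- (\<mu>\<^sup>2 * m / 16)) \<le> 0"
    proof -
      have "n \<ge> 1" using n_pos unfolding n_def by (simp add: Suc_leI)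
      thus ?thesis using True by simp
    qed
    thus ?thesis using measure_nonneg[of M S] unfolding S_def m_def n_def by linarith
  next
    case False
    define s where "s = sgn \<mu>"
    have s\<mu>: "s * \<mu> = \<bar>\<mu>\<bar>" unfolding s_def by (simp add: sgn_mult_abs abs_sgn)
    have ss: "s * s = 1" unfolding s_def using False by (simp add: sgn_mult_self_eq)
    define E where "E i = {\<omega> \<in> space M. s * (a0 i \<omega> \<bullet> 1) \<le> - \<bar>\<mu>\<bar> * m}" for i
    have E_meas: "E i \<in> sets M" for i
    proof -
      have "(\<lambda>\<omega>. s * (a0 i \<omega> \<bullet> 1)) \<in> borel_measurable M"
        using a0_rv[of i] by (measurable; simp)
      thus ?thesis unfolding E_def borel_measurable_iff_le by blast
    qed
    have E_bound: "measure M (E i) \<le> exp (- (\<mu>\<^sup>2 * m / 4))" for i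
    proof -
      define v :: "real^'m" where "v = (1 / sqrt m) *\<^sub>R 1"
      have "v \<bullet> v = 1" unfolding v_def inner_vec_def using m_pos
        by (simp add: m_def power_divide)
      hence nv: "norm v \<le> 1" by (simp add: norm_eq_sqrt_inner)
      define t where "t = - s * \<bar>\<mu>\<bar> * sqrt m / 2"
      have tx: "t * (x \<bullet> v) = - s * \<bar>\<mu>\<bar> / 2 * (x \<bullet> 1)" for x :: "real^'m"
        unfolding t_def v_def using m_pos by (simp add: inner_scaleR_right)
      have t2: "t\<^sup>2 = \<mu>\<^sup>2 * m / 4"
        unfolding t_def using m_pos ss
        by (simp add: power_mult_distrib power_divide power2_eq_square[of s])
      have "ennreal (exp (\<mu>\<^sup>2 * m / 2)) * emeasure M (E i)
          = (\<integral>\<^sup>+ \<omega>. ennreal (exp (\<mu>\<^sup>2 * m / 2)) * indicator (E i) \<omega> \<partial>M)"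
        by (rule nn_integral_cmult_indicator[symmetric, OF E_meas])
      also have "\<dots> \<le> (\<integral>\<^sup>+ \<omega>. ennreal (exp (t * (a0 i \<omega> \<bullet> v))) \<partial>M)"
      proof (rule nn_integral_mono)
        fix \<omega> assume "\<omega> \<in> space M"
        show "ennreal (exp (\<mu>\<^sup>2 * m / 2)) * indicator (E i) \<omega> \<le> ennreal (exp (t * (a0 i \<omega> \<bullet> v)))"
        proof (cases "\<omega> \<in> E i")
          case True
          hence h: "s * (a0 i \<omega> \<bullet> 1) \<le> - \<bar>\<mu>\<bar> * m" unfolding E_def by auto
          have "\<bar>\<mu>\<bar> / 2 * (\<bar>\<mu>\<bar> * m) \<le> \<bar>\<mu>\<bar> / 2 * (- s * (a0 i \<omega> \<bullet> 1))"
            by (rule mult_left_mono) (use h in auto)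
          hence "\<mu>\<^sup>2 * m / 2 \<le> t * (a0 i \<omega> \<bullet> v)" unfolding tx
            by (simp add: power2_eq_square field_simps)
          thus ?thesis using True by (simp add: ennreal_leI)
        qed simp
      qed
      also have "\<dots> \<le> ennreal (exp (t\<^sup>2))" by (rule subgauss[OF nv])
      finally have "ennreal (exp (\<mu>\<^sup>2 * m / 2) * measure M (E i)) \<le> ennreal (exp (\<mu>\<^sup>2 * m / 4))"
        unfolding t2 by (simp add: emeasure_eq_measure ennreal_mult)
      hence "exp (\<mu>\<^sup>2 * m / 2) * measure M (E i) \<le> exp (\<mu>\<^sup>2 * m / 4)"
        by (simp add: ennreal_le_iff)
      hence "measure M (E i) \<le> exp (\<mu>\<^sup>2 * m / 4) / exp (\<mu>\<^sup>2 * m / 2)"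
        by (simp add: field_simps)
      also have "\<dots> = exp (- (\<mu>\<^sup>2 * m / 4))" by (simp add: exp_diff[symmetric])
      finally show ?thesis .
    qed
    have sub: "space M - (\<Union>i. E i) \<subseteq> S"
    proof
      fix \<omega> assume h: "\<omega> \<in> space M - (\<Union>i. E i)"
      hence sp: "\<omega> \<in> space M" by auto
      have "(transpose (A \<omega>) *v (s *\<^sub>R 1)) $ i > 0" for i
      proof -
        have nE: "s * (a0 i \<omega> \<bullet> 1) > - \<bar>\<mu>\<bar> * m" using h unfolding E_def by (auto simp: not_le)
        have col: "A \<omega> $ j $ i = a0 i \<omega> $ j + \<mu>" for j
          using arg_cong[OF col_decomp[OF sp, of i], of "\<lambda>x. x $ j"] by (simp add: column_def)
        have "(transpose (A \<omega>) *v (s *\<^sub>R 1)) $ i = s * (\<Sum>j\<in>UNIV. a0 i \<omega> $ j + \<mu>)"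
          by (simp add: matrix_vector_mult_def transpose_def col sum_distrib_left mult.commute)
        also have "\<dots> = s * (a0 i \<omega> \<bullet> 1) + s * \<mu> * m"
          by (simp add: sum.distrib inner_vec_def m_def algebra_simps)
        finally show ?thesis using nE s\<mu> by simp
      qed
      thus "\<omega> \<in> S" unfolding S_def M_plus_def using sp by blast
    qed
    have "measure M (\<Union>i. E i) \<le> (\<Sum>i\<in>UNIV. measure M (E i))"
      using finite_measure_subadditive_finite[of UNIV E] E_meas by auto
    also have "\<dots> \<le> (\<Sum>i\<in>(UNIV::'n set). exp (- (\<mu>\<^sup>2 * m / 4)))"
      by (rule sum_mono) (rule E_bound)
    also have "\<dots> = n * exp (- (\<mu>\<^sup>2 * m / 4))" by (simp add: n_def)
    also have "\<dots> \<le> 2 * n * exp (- (\<mu>\<^sup>2 * m / 16))"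
    proof -
      have "\<mu>\<^sup>2 * m \<ge> 0" using m_pos by simp
      hence "exp (- (\<mu>\<^sup>2 * m / 4)) \<le> exp (- (\<mu>\<^sup>2 * m / 16))"
        by (simp add: mult.commute)
      hence "n * exp (- (\<mu>\<^sup>2 * m / 4)) \<le> n * exp (- (\<mu>\<^sup>2 * m / 16))"
        using n_pos by (intro mult_left_mono) auto
      moreover have "n * exp (- (\<mu>\<^sup>2 * m / 16)) \<le> 2 * n * exp (- (\<mu>\<^sup>2 * m / 16))"
        using n_pos by simp
      ultimately show ?thesis by linarith
    qed
    finally have U: "measure M (\<Union>i. E i) \<le> 2 * n * exp (- (\<mu>\<^sup>2 * m / 16))" .
    have UM: "(\<Union>i. E i) \<in> sets M" using E_meas by auto
    have "measure M (space M - (\<Union>i. E i)) \<le> measure M S"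
      by (rule finite_measure_mono[OF sub S_meas])
    moreover have "measure M (space M - (\<Union>i. E i)) = 1 - measure M (\<Union>i. E i)"
      using finite_measure_compl[OF UM] by (simp add: prob_space)
    ultimately show ?thesis using U unfolding S_def m_def n_def by linarith
  qed
qed

end
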